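(* Let $(V_o,w_o,\mu_o)$ be a simple weighted graph with adapted weight $\sigma_o$ and adapted path metric $d_{\sigma_o}$. Let $(V,w,\mu)$ be its modified graph with weight $\mathfrak n$, with adapted weight $\sigma$ and adapted path metric $d_\sigma$. Then: (1) $d_\sigma|_{V_o\times V_o}=d_{\sigma_o}$; (2) for every $x_0\in V_o$ and $r>0$, \[\mu_o\big(B_{d_{\sigma_o}}(x_0,r)\big)\le\mu\big(B_{d_\sigma}(x_0,r)\big)\le3\,\mu_o\big(B_{d_{\sigma_o}}(x_0,r)\big),\] where $B_{d_{\sigma_o}}(x_0,r)$ is a ball in $V_o$ and $B_{d_\sigma}(x_0,r)$ is a ball in $V$.
   Context: **Weighted graphs.** A simple weighted graph $(V,w,\mu)$ consists of a countably infinite set $V$, a symmetric function $w:V\times V\to[0,\infty)$ and a function $\mu:V\to(0,\infty)$. The graph with edges $\{x\sim y:w(x,y)>0\}$ is assumed to be locally finite, connected, and without loops or multiple edges. **Adapted weights and metrics.** An adapted weight is a symmetric $\sigma:E\to(0,1]$ with $\frac1{\mu(x)}\sum_y w(x,y)\sigma(x,y)^2\le1$ for all $x$. The adapted path metric $d_\sigma(x,y)$ is the infimum of $\sum_i\sigma(x_i,x_{i+1})$ over paths $x=x_0\sim\cdots\sim x_n=y$. Closed balls are $B_d(x,r)=\{y:d(x,y)\le r\}$. **Modified graph.** Fix an orientation $E_o^+$ of $E_o$, and let $\mathfrak n:E_o\to\mathbb N_+$ be symmetric with $\mathfrak n\ge2$. For $e=(x,y)\in E_o^+$, add distinct new vertices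 $x^e_1,\dots,x^e_{\mathfrak n(e)-1}$, set $x_0^e=x$, $x^e_{\mathfrak n(e)}=y$, and replace the edge $x\sim y$ by the path $x^e_0\sim\cdots\sim x^e_{\mathfrak n(e)}$. Weights and measure: - $w(x^e_i,x^e_{i+1})=\mathfrak n(e)w_o(e)$, symmetric, and $w=0$ otherwise; - $\mu=\mu_o$ on $V_o$, and $\mu(x^e_i)=2w_o(e)\sigma_o(e)^2/\mathfrak n(e)$ for $1\le i\le\mathfrak n(e)-1$; - $\sigma(x^e_i,x^e_{i+1})=\sigma_o(e)/\mathfrak n(e)$. *)

theory Defs
  imports "HOL-Analysis.Analysis"
begin

definition is_path :: "('v \<Rightarrow> 'v \<Rightarrow> real) \<Rightarrow> 'v list \<Rightarrow> bool" where
  "is_path w xs \<longleftrightarrow> xs \<noteq> [] \<and> (\<forall>i < length xs - 1. w (xs ! i) (xs ! Suc i) > 0)"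

definition weighted_graph :: "'v set \<Rightarrow> ('v \<Rightarrow> 'v \<Rightarrow> real) \<Rightarrow> ('v \<Rightarrow> real) \<Rightarrow> bool" where
  "weighted_graph V w \<mu> \<longleftrightarrow>
     countable V \<and> infinite V \<and>
     (\<forall>x y. w x y = w y x) \<and> (\<forall>x y. 0 \<le> w x y) \<and>
     (\<forall>x y. w x y > 0 \<longrightarrow> x \<in> V \<and> y \<in> V) \<and>
     (\<forall>x. w x x = 0) \<and>
     (\<forall>x\<in>V. 0 < \<mu> x) \<and>
     (\<forall>x\<in>V. finite {y. w x y > 0}) \<and>
     (\<forall>x\<in>V. \<forall>y\<in>V. \<exists>xs. is_path w xs \<and> hd xs = x \<and> last xs = y)"

definition adapted_weight :: "'v set \<Rightarrow> ('v \<Rightarrow> 'v \<Rightarrow> real) \<Rightarrow> ('v \<Rightarrow> real) \<Rightarrow> ('v \<Rightarrow> 'v \<Rightarrow> real) \<Rightarrow> bool" where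
  "adapted_weight V w \<mu> \<sigma> \<longleftrightarrow>
     (\<forall>x y. w x y > 0 \<longrightarrow> \<sigma> x y = \<sigma> y x \<and> 0 < \<sigma> x y \<and> \<sigma> x y \<le> 1) \<and>
     (\<forall>x\<in>V. (1 / \<mu> x) * (\<Sum>y\<in>{y. w x y > 0}. w x y * (\<sigma> x y)\<^sup>2) \<le> 1)"

definition path_len :: "('v \<Rightarrow> 'v \<Rightarrow> real) \<Rightarrow> 'v list \<Rightarrow> real" where
  "path_len \<sigma> xs = (\<Sum>i < length xs - 1. \<sigma> (xs ! i) (xs ! Suc i))"

definition path_dist :: "('v \<Rightarrow> 'v \<Rightarrow> real) \<Rightarrow> ('v \<Rightarrow> 'v \<Rightarrow> real) \<Rightarrow> 'v \<Rightarrow> 'v \<Rightarrow> real" where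
  "path_dist w \<sigma> x y = Inf {path_len \<sigma> xs | xs. is_path w xs \<and> hd xs = x \<and> last xs = y}"

definition cball_in :: "'v set \<Rightarrow> ('v \<Rightarrow> 'v \<Rightarrow> real) \<Rightarrow> 'v \<Rightarrow> real \<Rightarrow> 'v set" where
  "cball_in V d x r = {y \<in> V. d x y \<le> r}"

definition vmeasure :: "('v \<Rightarrow> real) \<Rightarrow> 'v set \<Rightarrow> ennreal" where
  "vmeasure \<mu> A = (\<Sum>\<^sub>\<infinity>x\<in>A. ennreal (\<mu> x))"

text \<open>Vertices of the modified graph: original vertices, and new vertices
  Sub x y i standing for x^e_i, e = (x,y) in the orientation E_o^+, 1 \<le> i \<le> n(e)-1.\<close>

datatype 'a mvert = Orig 'a | Sub 'a 'a nat

definition orientation :: "('a \<Rightarrow> 'a \<Rightarrow> real) \<Rightarrow> ('a \<Rightarrow> 'a \<Rightarrow> bool) \<Rightarrow> bool" where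
  "orientation w ori \<longleftrightarrow> (\<forall>x y. ori x y \<longrightarrow> w x y > 0) \<and>
     (\<forall>x y. w x y > 0 \<longrightarrow> (ori x y \<longleftrightarrow> \<not> ori y x))"

definition mpt :: "('a \<Rightarrow> 'a \<Rightarrow> nat) \<Rightarrow> 'a \<Rightarrow> 'a \<Rightarrow> nat \<Rightarrow> 'a mvert" where
  "mpt n x y i = (if i = 0 then Orig x else if i = n x y then Orig y else Sub x y i)"

definition mod_V :: "'a set \<Rightarrow> ('a \<Rightarrow> 'a \<Rightarrow> bool) \<Rightarrow> ('a \<Rightarrow> 'a \<Rightarrow> nat) \<Rightarrow> 'a mvert set" where
  "mod_V Vo ori n = Orig ` Vo \<union> {Sub x y i | x y i. ori x y \<and> 1 \<le> i \<and> i \<le> n x y - 1}"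

definition sub_edge :: "('a \<Rightarrow> 'a \<Rightarrow> bool) \<Rightarrow> ('a \<Rightarrow> 'a \<Rightarrow> nat) \<Rightarrow> 'a mvert \<Rightarrow> 'a mvert \<Rightarrow> 'a \<Rightarrow> 'a \<Rightarrow> nat \<Rightarrow> bool" where
  "sub_edge ori n u v x y i \<longleftrightarrow> ori x y \<and> i < n x y \<and>
     ((u = mpt n x y i \<and> v = mpt n x y (Suc i)) \<or> (v = mpt n x y i \<and> u = mpt n x y (Suc i)))"

definition mod_w :: "('a \<Rightarrow> 'a \<Rightarrow> real) \<Rightarrow> ('a \<Rightarrow> 'a \<Rightarrow> bool) \<Rightarrow> ('a \<Rightarrow> 'a \<Rightarrow> nat) \<Rightarrow> 'a mvert \<Rightarrow> 'a mvert \<Rightarrow> real" where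
  "mod_w wo ori n u v =
     (if \<exists>x y i. sub_edge ori n u v x y i
      then (SOME c. \<exists>x y i. sub_edge ori n u v x y i \<and> c = real (n x y) * wo x y)
      else 0)"

definition mod_sigma :: "('a \<Rightarrow> 'a \<Rightarrow> real) \<Rightarrow> ('a \<Rightarrow> 'a \<Rightarrow> bool) \<Rightarrow> ('a \<Rightarrow> 'a \<Rightarrow> nat) \<Rightarrow> 'a mvert \<Rightarrow> 'a mvert \<Rightarrow> real" where
  "mod_sigma \<sigma>o ori n u v =
     (if \<exists>x y i. sub_edge ori n u v x y i
      then (SOME c. \<exists>x y i. sub_edge ori n u v x y i \<and> c = \<sigma>o x y / real (n x y))
      else 0)"

fun mod_mu :: "('a \<Rightarrow> 'a \<Rightarrow> real) \<Rightarrow> ('a \<Rightarrow> real) \<Rightarrow> ('a \<Rightarrow> 'a \<Rightarrow> real) \<Rightarrow> ('a \<Rightarrow> 'a \<Rightarrow> nat) \<Rightarrow> 'a mvert \<Rightarrow> real" where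
  "mod_mu wo \<mu>o \<sigma>o n (Orig x) = \<mu>o x"
| "mod_mu wo \<mu>o \<sigma>o n (Sub x y i) = 2 * wo x y * (\<sigma>o x y)\<^sup>2 / real (n x y)"

end

theory Submission
  imports Defs
begin


lemma is_path_single[simp]: "is_path w [a]"
  by (simp add: is_path_def)

lemma is_path_Cons2[simp]: "is_path w (a#b#xs) \<longleftrightarrow> w a b > 0 \<and> is_path w (b#xs)"
  unfolding is_path_def
  apply (auto simp: less_Suc_eq_0_disj)
  done

lemma path_len_single[simp]: "path_len \<sigma> [a] = 0"
  by (simp add: path_len_def)

lemma path_len_Cons2[simp]: "path_len \<sigma> (a#b#xs) = \<sigma> a b + path_len \<sigma> (b#xs)"
proof -
  have "length (a#b#xs) - 1 = Suc (length xs)" by simp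
  then show ?thesis unfolding path_len_def by (simp only: sum.lessThan_Suc_shift) simp
qed

lemma path_lip_aux:
  assumes "\<And>u v. w u v > 0 \<Longrightarrow> f v \<le> f u + \<sigma> u v"
  shows "is_path w (a#ys) \<Longrightarrow> f (last (a#ys)) \<le> f a + path_len \<sigma> (a#ys)"
proof (induction ys arbitrary: a)
  case Nil then show ?case by simp
next
  case (Cons b ys)
  then have "f (last (b#ys)) \<le> f b + path_len \<sigma> (b#ys)" and "w a b > 0" by auto
  with assms[of a b] show ?case by simp
qed

lemma path_lip:
  assumes "\<And>u v. w u v > 0 \<Longrightarrow> f v \<le> f u + \<sigma> u v" "is_path w xs"
  shows "f (last xs) \<le> f (hd xs) + path_len \<sigma> xs"
proof -
  obtain a ys where "xs = a#ys" using assms(2) by (cases xs) (auto simp: is_path_def)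
  with path_lip_aux[of w f \<sigma> a ys] assms show ?thesis by simp
qed

lemma path_len_nonneg:
  assumes "\<And>u v. w u v > 0 \<Longrightarrow> 0 \<le> \<sigma> u v" "is_path w xs"
  shows "0 \<le> path_len \<sigma> xs"
  using path_lip[of w "\<lambda>_. 0" \<sigma> xs] assms by auto

lemma path_join_aux:
  shows "is_path w (a#xs) \<Longrightarrow> is_path w ys \<Longrightarrow> last (a#xs) = hd ys \<Longrightarrow>
    is_path w (butlast (a#xs) @ ys) \<and> path_len \<sigma> (butlast (a#xs) @ ys) = path_len \<sigma> (a#xs) + path_len \<sigma> ys
    \<and> hd (butlast (a#xs) @ ys) = a"
proof (induction xs arbitrary: a)
  case Nil
  then show ?case by (cases ys) auto
next
  case (Cons b xs)
  then have IH: "is_path w (butlast (b#xs) @ ys) \<and> path_len \<sigma> (butlast (b#xs) @ ys) = path_len \<sigma> (b#xs) + path_len \<sigma> ys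
    \<and> hd (butlast (b#xs) @ ys) = b" by auto
  have ne: "butlast (b#xs) @ ys \<noteq> []" using IH by (auto simp: is_path_def)
  then obtain c zs where cz: "butlast (b#xs) @ ys = c # zs" by (cases "butlast (b#xs) @ ys") auto
  with IH have "c = b" by simp
  have "butlast (a#b#xs) @ ys = a # (butlast (b#xs) @ ys)" by simp
  then show ?case using IH Cons.prems cz \<open>c = b\<close> by simp
qed

lemma path_join:
  assumes "is_path w xs" "is_path w ys" "last xs = hd ys"
  shows "is_path w (butlast xs @ ys)" "path_len \<sigma> (butlast xs @ ys) = path_len \<sigma> xs + path_len \<sigma> ys"
    "hd (butlast xs @ ys) = hd xs" "last (butlast xs @ ys) = last ys"
proof -
  obtain a zs where xs: "xs = a#zs" using assms(1) by (cases xs) (auto simp: is_path_def)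
  from path_join_aux[of w a zs ys \<sigma>] assms xs
  show "is_path w (butlast xs @ ys)" "path_len \<sigma> (butlast xs @ ys) = path_len \<sigma> xs + path_len \<sigma> ys"
    "hd (butlast xs @ ys) = hd xs" by auto
  show "last (butlast xs @ ys) = last ys" using assms(2) by (auto simp: is_path_def)
qed

lemma dist_ge:
  assumes "\<And>u v. w u v > 0 \<Longrightarrow> f v \<le> f u + \<sigma> u v"
    and "is_path w xs" "hd xs = x" "last xs = y"
  shows "f y - f x \<le> path_dist w \<sigma> x y"
  unfolding path_dist_def
proof (rule cInf_greatest)
  show "{path_len \<sigma> xs |xs. is_path w xs \<and> hd xs = x \<and> last xs = y} \<noteq> {}" using assms by blast
next
  fix l assume "l \<in> {path_len \<sigma> xs |xs. is_path w xs \<and> hd xs = x \<and> last xs = y}"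
  then obtain zs where "l = path_len \<sigma> zs" "is_path w zs" "hd zs = x" "last zs = y" by blast
  with path_lip[of w f \<sigma> zs] assms(1) show "f y - f x \<le> l" by simp
qed

lemma dist_le:
  assumes "\<And>u v. w u v > 0 \<Longrightarrow> 0 \<le> \<sigma> u v"
    and "is_path w xs" "hd xs = x" "last xs = y"
  shows "path_dist w \<sigma> x y \<le> path_len \<sigma> xs"
  unfolding path_dist_def
proof (rule cInf_lower)
  show "path_len \<sigma> xs \<in> {path_len \<sigma> xs |xs. is_path w xs \<and> hd xs = x \<and> last xs = y}" using assms by blast
  show "bdd_below {path_len \<sigma> xs |xs. is_path w xs \<and> hd xs = x \<and> last xs = y}"
    by (rule bdd_belowI[of _ 0]) (use path_len_nonneg[OF assms(1)] in auto)
qed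

lemma map_path:
  assumes "\<And>k. k < K \<Longrightarrow> w (p k) (p (Suc k)) > 0 \<and> \<sigma> (p k) (p (Suc k)) = c"
  shows "is_path w (map p [0..<Suc K])" "path_len \<sigma> (map p [0..<Suc K]) = real K * c"
    "hd (map p [0..<Suc K]) = p 0" "last (map p [0..<Suc K]) = p K"
proof -
  show "is_path w (map p [0..<Suc K])" unfolding is_path_def
    using assms by (simp del: upt_Suc)
  have "path_len \<sigma> (map p [0..<Suc K]) = (\<Sum>i<K. \<sigma> (p i) (p (Suc i)))"
    unfolding path_len_def by (intro sum.cong) (auto simp del: upt_Suc)
  also have "\<dots> = (\<Sum>i<K. c)" using assms by (intro sum.cong) auto
  finally show "path_len \<sigma> (map p [0..<Suc K]) = real K * c" by simp
  show "hd (map p [0..<Suc K]) = p 0" by (simp add: hd_map del: upt_Suc)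
  show "last (map p [0..<Suc K]) = p K" by (simp add: last_map del: upt_Suc)
qed




locale modg =
  fixes Vo :: "'a set" and wo :: "'a \<Rightarrow> 'a \<Rightarrow> real" and \<mu>o :: "'a \<Rightarrow> real"
    and \<sigma>o :: "'a \<Rightarrow> 'a \<Rightarrow> real" and ori :: "'a \<Rightarrow> 'a \<Rightarrow> bool" and n :: "'a \<Rightarrow> 'a \<Rightarrow> nat"
  assumes G: "weighted_graph Vo wo \<mu>o"
    and S: "adapted_weight Vo wo \<mu>o \<sigma>o"
    and O: "orientation wo ori"
    and n_sym: "\<forall>x y. wo x y > 0 \<longrightarrow> n x y = n y x"
    and n_ge2: "\<forall>x y. wo x y > 0 \<longrightarrow> 2 \<le> n x y"
begin

abbreviation "W \<equiv> mod_w wo ori n"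
abbreviation "Sg \<equiv> mod_sigma \<sigma>o ori n"
abbreviation "d0 \<equiv> path_dist wo \<sigma>o"

lemma wsym: "wo x y = wo y x" using G by (auto simp: weighted_graph_def)
lemma wV: "wo x y > 0 \<Longrightarrow> x \<in> Vo \<and> y \<in> Vo" using G by (auto simp: weighted_graph_def)
lemma mu_pos: "x \<in> Vo \<Longrightarrow> 0 < \<mu>o x" using G by (auto simp: weighted_graph_def)
lemma nb_fin: "x \<in> Vo \<Longrightarrow> finite {y. wo x y > 0}" using G by (auto simp: weighted_graph_def)
lemma conn_o: "x \<in> Vo \<Longrightarrow> y \<in> Vo \<Longrightarrow> \<exists>xs. is_path wo xs \<and> hd xs = x \<and> last xs = y"
  using G by (auto simp: weighted_graph_def)
lemma sig: "wo x y > 0 \<Longrightarrow> \<sigma>o x y = \<sigma>o y x \<and> 0 < \<sigma>o x y" using S by (auto simp: adapted_weight_def)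
lemma adapted: "x \<in> Vo \<Longrightarrow> (\<Sum>y\<in>{y. wo x y > 0}. wo x y * (\<sigma>o x y)\<^sup>2) \<le> \<mu>o x"
proof -
  assume x: "x \<in> Vo"
  with S have "(1 / \<mu>o x) * (\<Sum>y\<in>{y. wo x y > 0}. wo x y * (\<sigma>o x y)\<^sup>2) \<le> 1"
    by (auto simp: adapted_weight_def)
  with mu_pos[OF x] show ?thesis by (simp add: field_simps)
qed
lemma ori_w: "ori x y \<Longrightarrow> wo x y > 0" using O by (auto simp: orientation_def)
lemma ori_or: "wo x y > 0 \<Longrightarrow> ori x y \<or> ori y x" using O by (auto simp: orientation_def)
lemma ori_anti: "ori x y \<Longrightarrow> \<not> ori y x" using O by (auto simp: orientation_def)
lemma nsym: "wo x y > 0 \<Longrightarrow> n x y = n y x" using n_sym by auto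
lemma nge2: "wo x y > 0 \<Longrightarrow> 2 \<le> n x y" using n_ge2 by auto

lemma mpt0: "mpt n x y 0 = Orig x" by (simp add: mpt_def)
lemma mptn: "ori x y \<Longrightarrow> mpt n x y (n x y) = Orig y"
proof -
  assume "ori x y"
  then have "n x y \<noteq> 0" using nge2[OF ori_w] by fastforce
  then show ?thesis by (simp add: mpt_def)
qed
lemma mptmid: "0 < k \<Longrightarrow> k < n x y \<Longrightarrow> mpt n x y k = Sub x y k" by (simp add: mpt_def)

lemma mpt_sub: "mpt n x y k = Sub a b j \<Longrightarrow> a = x \<and> b = y"
  by (auto simp: mpt_def split: if_splits)

lemma sub_edge_has_Sub:
  assumes "sub_edge ori n u v x y i"
  shows "\<exists>j. u = Sub x y j \<or> v = Sub x y j"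
proof -
  from assms have o: "ori x y" and i: "i < n x y" by (auto simp: sub_edge_def)
  have n2: "2 \<le> n x y" using nge2[OF ori_w[OF o]] .
  show ?thesis
  proof (cases "i = 0")
    case True
    then have "mpt n x y (Suc i) = Sub x y 1" using n2 by (simp add: mpt_def)
    then show ?thesis using assms by (auto simp: sub_edge_def)
  next
    case False
    then have "mpt n x y i = Sub x y i" using i by (simp add: mpt_def)
    then show ?thesis using assms by (auto simp: sub_edge_def)
  qed
qed

lemma sub_edge_subs:
  assumes "sub_edge ori n u v x y i"
  shows "u = Sub a b j \<Longrightarrow> a = x \<and> b = y" "v = Sub a b j \<Longrightarrow> a = x \<and> b = y"
  using assms mpt_sub unfolding sub_edge_def by metis+

lemma sub_edge_unique:
  assumes "sub_edge ori n u v x y i" "sub_edge ori n u v x' y' i'"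
  shows "x = x' \<and> y = y'"
proof -
  obtain j where "u = Sub x y j \<or> v = Sub x y j" using sub_edge_has_Sub[OF assms(1)] by blast
  then show ?thesis using sub_edge_subs[OF assms(2)] by blast
qed

lemma W_pos:
  assumes "W u v > 0"
  shows "\<exists>x y i. sub_edge ori n u v x y i \<and> Sg u v = \<sigma>o x y / real (n x y)"
proof -
  have ex: "\<exists>x y i. sub_edge ori n u v x y i" using assms by (auto simp: mod_w_def split: if_splits)
  then have "\<exists>c x y i. sub_edge ori n u v x y i \<and> c = \<sigma>o x y / real (n x y)" by blast
  then have "\<exists>x y i. sub_edge ori n u v x y i \<and> (SOME c. \<exists>x y i. sub_edge ori n u v x y i \<and> c = \<sigma>o x y / real (n x y)) = \<sigma>o x y / real (n x y)"
    by (rule someI_ex[where P="\<lambda>c. \<exists>x y i. sub_edge ori n u v x y i \<and> c = \<sigma>o x y / real (n x y)"])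
  with ex show ?thesis by (simp add: mod_sigma_def)
qed

lemma sub_edge_W:
  assumes "sub_edge ori n u v x y i"
  shows "W u v > 0" "Sg u v = \<sigma>o x y / real (n x y)"
proof -
  have ex: "\<exists>x y i. sub_edge ori n u v x y i" using assms by blast
  then have "\<exists>c x y i. sub_edge ori n u v x y i \<and> c = real (n x y) * wo x y" by blast
  then have "\<exists>x y i. sub_edge ori n u v x y i \<and> (SOME c. \<exists>x y i. sub_edge ori n u v x y i \<and> c = real (n x y) * wo x y) = real (n x y) * wo x y"
    by (rule someI_ex[where P="\<lambda>c. \<exists>x y i. sub_edge ori n u v x y i \<and> c = real (n x y) * wo x y"])
  then obtain x' y' i' where s: "sub_edge ori n u v x' y' i'" and "W u v = real (n x' y') * wo x' y'"
    using ex by (auto simp: mod_w_def)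
  moreover have "wo x' y' > 0" using s ori_w by (auto simp: sub_edge_def)
  moreover have "n x' y' \<ge> 2" using nge2 calculation(3) by blast
  ultimately show "W u v > 0" by simp
  obtain x'' y'' i'' where s2: "sub_edge ori n u v x'' y'' i''" and "Sg u v = \<sigma>o x'' y'' / real (n x'' y'')"
    using W_pos[OF \<open>W u v > 0\<close>] by blast
  with sub_edge_unique[OF assms s2] show "Sg u v = \<sigma>o x y / real (n x y)" by simp
qed

lemma Sg_nonneg: "W u v > 0 \<Longrightarrow> 0 \<le> Sg u v"
proof -
  assume "W u v > 0"
  then obtain x y i where "sub_edge ori n u v x y i" "Sg u v = \<sigma>o x y / real (n x y)" using W_pos by blast
  moreover then have "wo x y > 0" using ori_w by (auto simp: sub_edge_def)
  ultimately show ?thesis using sig[of x y] by simp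
qed

lemma sig_nonneg_o: "wo u v > 0 \<Longrightarrow> 0 \<le> \<sigma>o u v" using sig by force

lemma d0_self: "x \<in> Vo \<Longrightarrow> d0 x x = 0"
proof -
  assume x: "x \<in> Vo"
  have "d0 x x \<le> path_len \<sigma>o [x]" by (rule dist_le) (auto simp: sig_nonneg_o)
  moreover have "(\<lambda>_. 0::real) x - (\<lambda>_. 0) x \<le> d0 x x"
    by (rule dist_ge[where xs="[x]"]) (auto simp: sig_nonneg_o)
  ultimately show ?thesis by simp
qed

lemma d0_nonneg: "x \<in> Vo \<Longrightarrow> y \<in> Vo \<Longrightarrow> 0 \<le> d0 x y"
proof -
  assume "x \<in> Vo" "y \<in> Vo"
  then obtain xs where "is_path wo xs" "hd xs = x" "last xs = y" using conn_o by blast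
  then have "(\<lambda>_. 0::real) y - (\<lambda>_. 0) x \<le> d0 x y"
    by (intro dist_ge[where xs=xs]) (auto simp: sig_nonneg_o)
  then show ?thesis by simp
qed

lemma d0_tri:
  assumes x0: "x0 \<in> Vo" and e: "wo x y > 0"
  shows "d0 x0 y \<le> d0 x0 x + \<sigma>o x y"
proof -
  have "d0 x0 y - \<sigma>o x y \<le> d0 x0 x"
    unfolding path_dist_def[of wo \<sigma>o x0 x]
  proof (rule cInf_greatest)
    show "{path_len \<sigma>o xs |xs. is_path wo xs \<and> hd xs = x0 \<and> last xs = x} \<noteq> {}"
      using conn_o[OF x0] wV[OF e] by blast
  next
    fix l assume "l \<in> {path_len \<sigma>o xs |xs. is_path wo xs \<and> hd xs = x0 \<and> last xs = x}"
    then obtain p where p: "l = path_len \<sigma>o p" "is_path wo p" "hd p = x0" "last p = x" by blast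
    have q: "is_path wo [x, y]" using e by simp
    have "d0 x0 y \<le> path_len \<sigma>o (butlast p @ [x,y])"
      by (rule dist_le) (use path_join[OF p(2) q] p in \<open>auto simp: sig_nonneg_o\<close>)
    also have "\<dots> = l + \<sigma>o x y" using path_join[OF p(2) q] p by simp
    finally show "d0 x0 y - \<sigma>o x y \<le> l" by simp
  qed
  then show ?thesis by simp
qed

end



context modg begin

definition gseg :: "'a \<Rightarrow> 'a \<Rightarrow> 'a \<Rightarrow> real \<Rightarrow> real" where
  "gseg x0 x y t = min (d0 x0 x + t * (\<sigma>o x y / real (n x y)))
                       (d0 x0 y + (real (n x y) - t) * (\<sigma>o x y / real (n x y)))"

definition fL :: "'a \<Rightarrow> 'a mvert \<Rightarrow> real" where
  "fL x0 v = (case v of Orig z \<Rightarrow> d0 x0 z | Sub x y i \<Rightarrow> gseg x0 x y (real i))"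

lemma gseg_mpt:
  assumes x0: "x0 \<in> Vo" and o: "ori x y" and k: "k \<le> n x y"
  shows "fL x0 (mpt n x y k) = gseg x0 x y (real k)"
proof -
  have e: "wo x y > 0" using ori_w[OF o] .
  have e': "wo y x > 0" using e wsym by simp
  have N: "real (n x y) > 0" using nge2[OF e] by simp
  have t1: "d0 x0 y \<le> d0 x0 x + \<sigma>o x y" using d0_tri[OF x0 e] .
  have t2: "d0 x0 x \<le> d0 x0 y + \<sigma>o x y" using d0_tri[OF x0 e'] sig[OF e] by simp
  consider "k = 0" | "k = n x y" | "0 < k \<and> k < n x y" using k by linarith
  then show ?thesis
  proof cases
    case 1
    then show ?thesis using t2 N by (simp add: mpt0 fL_def gseg_def min_def)
  next
    case 2
    then show ?thesis using t1 N mptn[OF o] by (simp add: fL_def gseg_def min_def)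
  next
    case 3
    then show ?thesis by (simp add: mptmid fL_def)
  qed
qed

lemma gseg_step:
  fixes a b c t N :: real
  assumes "0 \<le> c"
  shows "min (a + (t+1) * c) (b + (N - (t+1)) * c) \<le> min (a + t * c) (b + (N - t) * c) + c"
    "min (a + t * c) (b + (N - t) * c) \<le> min (a + (t+1) * c) (b + (N - (t+1)) * c) + c"
proof -
  have e: "(t+1)*c = t*c + c" "(N-(t+1))*c = (N-t)*c - c" by (auto simp: algebra_simps)
  show "min (a + (t+1) * c) (b + (N - (t+1)) * c) \<le> min (a + t * c) (b + (N - t) * c) + c"
    unfolding e using assms by (simp add: min_def)
  show "min (a + t * c) (b + (N - t) * c) \<le> min (a + (t+1) * c) (b + (N - (t+1)) * c) + c"
    unfolding e using assms by (simp add: min_def)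
qed

lemma fL_lip:
  assumes x0: "x0 \<in> Vo" and W: "W u v > 0"
  shows "fL x0 v \<le> fL x0 u + Sg u v"
proof -
  obtain x y i where s: "sub_edge ori n u v x y i" and Sgv: "Sg u v = \<sigma>o x y / real (n x y)"
    using W_pos[OF W] by blast
  have o: "ori x y" and i: "i < n x y" using s by (auto simp: sub_edge_def)
  have c: "0 \<le> \<sigma>o x y / real (n x y)" using sig[OF ori_w[OF o]] by simp
  have A: "fL x0 (mpt n x y i) = gseg x0 x y (real i)" using gseg_mpt[OF x0 o] i by simp
  have B: "fL x0 (mpt n x y (Suc i)) = gseg x0 x y (real i + 1)" using gseg_mpt[OF x0 o, of "Suc i"] i by (simp add: add.commute)
  have st: "gseg x0 x y (real i + 1) \<le> gseg x0 x y (real i) + \<sigma>o x y / real (n x y)"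
    "gseg x0 x y (real i) \<le> gseg x0 x y (real i + 1) + \<sigma>o x y / real (n x y)"
    unfolding gseg_def using gseg_step[OF c] by blast+
  from s consider "u = mpt n x y i \<and> v = mpt n x y (Suc i)" | "v = mpt n x y i \<and> u = mpt n x y (Suc i)"
    by (auto simp: sub_edge_def)
  then show ?thesis using A B st Sgv by cases auto
qed

lemma fL_orig: "fL x0 (Orig z) = d0 x0 z" by (simp add: fL_def)

lemma mod_dist_ge:
  assumes x0: "x0 \<in> Vo" and q: "is_path W q" "hd q = Orig x0" "last q = v"
  shows "fL x0 v \<le> path_dist W Sg (Orig x0) v"
  using dist_ge[of W "fL x0" Sg q "Orig x0" v] fL_lip[OF x0] q d0_self[OF x0] by (simp add: fL_orig)

lemma mod_dist_le:
  "is_path W q \<Longrightarrow> hd q = a \<Longrightarrow> last q = b \<Longrightarrow> path_dist W Sg a b \<le> path_len Sg q"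
  by (rule dist_le) (auto simp: Sg_nonneg)

lemma seg:
  assumes e: "wo x y > 0"
  shows "\<exists>q. is_path W q \<and> hd q = Orig x \<and> last q = Orig y \<and> path_len Sg q = \<sigma>o x y"
proof (cases "ori x y")
  case True
  let ?N = "n x y"
  have N: "real ?N > 0" using nge2[OF e] by simp
  have st: "\<And>k. k < ?N \<Longrightarrow> W (mpt n x y k) (mpt n x y (Suc k)) > 0 \<and> Sg (mpt n x y k) (mpt n x y (Suc k)) = \<sigma>o x y / real ?N"
  proof -
    fix k assume "k < ?N"
    then have "sub_edge ori n (mpt n x y k) (mpt n x y (Suc k)) x y k" using True by (simp add: sub_edge_def)
    then show "W (mpt n x y k) (mpt n x y (Suc k)) > 0 \<and> Sg (mpt n x y k) (mpt n x y (Suc k)) = \<sigma>o x y / real ?N"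
      using sub_edge_W by blast
  qed
  note mp = map_path[of ?N W "mpt n x y" Sg "\<sigma>o x y / real ?N", OF st]
  show ?thesis
    by (rule exI[of _ "map (mpt n x y) [0..<Suc ?N]"]) (use mp N mpt0 mptn[OF True] in auto)
next
  case False
  then have o: "ori y x" using ori_or[OF e] by blast
  let ?N = "n y x"
  have e': "wo y x > 0" using e wsym by simp
  have N: "real ?N > 0" using nge2[OF e'] by simp
  let ?p = "\<lambda>k. mpt n y x (?N - k)"
  have st: "\<And>k. k < ?N \<Longrightarrow> W (?p k) (?p (Suc k)) > 0 \<and> Sg (?p k) (?p (Suc k)) = \<sigma>o y x / real ?N"
  proof -
    fix k assume k: "k < ?N"
    then have "Suc (?N - Suc k) = ?N - k" by simp
    then have "sub_edge ori n (?p k) (?p (Suc k)) y x (?N - Suc k)" using o k by (simp add: sub_edge_def)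
    then show "W (?p k) (?p (Suc k)) > 0 \<and> Sg (?p k) (?p (Suc k)) = \<sigma>o y x / real ?N"
      using sub_edge_W by blast
  qed
  note mp = map_path[of ?N W ?p Sg "\<sigma>o y x / real ?N", OF st]
  show ?thesis
    by (rule exI[of _ "map ?p [0..<Suc ?N]"]) (use mp N mpt0 mptn[OF o] sig[OF e] in auto)
qed

lemma lift_aux:
  "is_path wo (a#ys) \<Longrightarrow> \<exists>q. is_path W q \<and> hd q = Orig a \<and> last q = Orig (last (a#ys)) \<and> path_len Sg q = path_len \<sigma>o (a#ys)"
proof (induction ys arbitrary: a)
  case Nil
  show ?case by (rule exI[of _ "[Orig a]"]) simp
next
  case (Cons b ys)
  then obtain q where q: "is_path W q" "hd q = Orig b" "last q = Orig (last (b#ys))" "path_len Sg q = path_len \<sigma>o (b#ys)"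
    by auto
  from Cons.prems have e: "wo a b > 0" by simp
  obtain s where s: "is_path W s" "hd s = Orig a" "last s = Orig b" "path_len Sg s = \<sigma>o a b" using seg[OF e] by blast
  have "last s = hd q" using s q by simp
  note j = path_join[OF s(1) q(1) this]
  show ?case by (rule exI[of _ "butlast s @ q"]) (use j s q in auto)
qed

lemma lift:
  assumes "is_path wo p"
  shows "\<exists>q. is_path W q \<and> hd q = Orig (hd p) \<and> last q = Orig (last p) \<and> path_len Sg q = path_len \<sigma>o p"
proof -
  obtain a ys where "p = a#ys" using assms by (cases p) (auto simp: is_path_def)
  with lift_aux[of a ys] assms show ?thesis by simp
qed

lemma sub_path:
  assumes o: "ori x y" and i: "i < n x y"
  shows "\<exists>q. is_path W q \<and> hd q = Orig x \<and> last q = mpt n x y i"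
proof -
  have st: "\<And>k. k < i \<Longrightarrow> W (mpt n x y k) (mpt n x y (Suc k)) > 0 \<and> Sg (mpt n x y k) (mpt n x y (Suc k)) = \<sigma>o x y / real (n x y)"
  proof -
    fix k assume "k < i"
    then have "sub_edge ori n (mpt n x y k) (mpt n x y (Suc k)) x y k" using o i by (simp add: sub_edge_def)
    then show "W (mpt n x y k) (mpt n x y (Suc k)) > 0 \<and> Sg (mpt n x y k) (mpt n x y (Suc k)) = \<sigma>o x y / real (n x y)"
      using sub_edge_W by blast
  qed
  note mp = map_path[of i W "mpt n x y" Sg "\<sigma>o x y / real (n x y)", OF st]
  show ?thesis
    by (rule exI[of _ "map (mpt n x y) [0..<Suc i]"]) (use mp mpt0 in auto)
qed

lemma conn_mod:
  assumes x0: "x0 \<in> Vo" and v: "v \<in> mod_V Vo ori n"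
  shows "\<exists>q. is_path W q \<and> hd q = Orig x0 \<and> last q = v"
proof -
  have "\<exists>z s. z \<in> Vo \<and> is_path W s \<and> hd s = Orig z \<and> last s = v"
  proof (cases v)
    case (Orig z)
    then show ?thesis using v by (intro exI[of _ z] exI[of _ "[v]"]) (auto simp: mod_V_def)
  next
    case (Sub x y i)
    then have o: "ori x y" and i: "1 \<le> i" "i \<le> n x y - 1" using v by (auto simp: mod_V_def)
    have N: "2 \<le> n x y" using nge2[OF ori_w[OF o]] .
    then have il: "i < n x y" using i by linarith
    have "mpt n x y i = v" using Sub i il by (simp add: mptmid)
    then show ?thesis using sub_path[OF o il] wV[OF ori_w[OF o]] by metis
  qed
  then obtain z s where z: "z \<in> Vo" and s: "is_path W s" "hd s = Orig z" "last s = v" by blast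
  obtain p where p: "is_path wo p" "hd p = x0" "last p = z" using conn_o[OF x0 z] by blast
  obtain q where q: "is_path W q" "hd q = Orig x0" "last q = Orig z" using lift[OF p(1)] p by auto
  have "last q = hd s" using q s by simp
  note j = path_join[OF q(1) s(1) this]
  show ?thesis by (rule exI[of _ "butlast q @ s"]) (use j q s in auto)
qed

lemma part1:
  assumes x: "x \<in> Vo" and y: "y \<in> Vo"
  shows "path_dist W Sg (Orig x) (Orig y) = d0 x y"
proof (rule antisym)
  obtain q where q: "is_path W q" "hd q = Orig x" "last q = Orig y"
    using conn_mod[OF x, of "Orig y"] y by (auto simp: mod_V_def)
  show "d0 x y \<le> path_dist W Sg (Orig x) (Orig y)"
    using mod_dist_ge[OF x q] by (simp add: fL_orig)
  show "path_dist W Sg (Orig x) (Orig y) \<le> d0 x y"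
    unfolding path_dist_def[of wo \<sigma>o x y]
  proof (rule cInf_greatest)
    show "{path_len \<sigma>o xs |xs. is_path wo xs \<and> hd xs = x \<and> last xs = y} \<noteq> {}"
      using conn_o[OF x y] by blast
  next
    fix l assume "l \<in> {path_len \<sigma>o xs |xs. is_path wo xs \<and> hd xs = x \<and> last xs = y}"
    then obtain p where p: "l = path_len \<sigma>o p" "is_path wo p" "hd p = x" "last p = y" by blast
    obtain q where "is_path W q" "hd q = Orig x" "last q = Orig y" "path_len Sg q = l"
      using lift[OF p(2)] p by auto
    then show "path_dist W Sg (Orig x) (Orig y) \<le> l" using mod_dist_le by metis
  qed
qed

lemma sub_in_ball:
  assumes x0: "x0 \<in> Vo" and o: "ori x y" and i: "1 \<le> i" "i \<le> n x y - 1"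
    and r: "path_dist W Sg (Orig x0) (Sub x y i) \<le> r"
  shows "d0 x0 x \<le> r \<or> d0 x0 y \<le> r"
proof -
  have v: "Sub x y i \<in> mod_V Vo ori n" using o i by (auto simp: mod_V_def)
  obtain q where q: "is_path W q" "hd q = Orig x0" "last q = Sub x y i" using conn_mod[OF x0 v] by blast
  have "fL x0 (Sub x y i) \<le> r" using mod_dist_ge[OF x0 q] r by simp
  moreover have e: "wo x y > 0" using ori_w[OF o] .
  moreover have "0 \<le> real i * (\<sigma>o x y / real (n x y))" using sig[OF e] by simp
  moreover have "0 \<le> (real (n x y) - real i) * (\<sigma>o x y / real (n x y))" using sig[OF e] i by simp
  ultimately show ?thesis by (auto simp: fL_def gseg_def min_def split: if_splits)
qed

end



lemma vm_SUP: "vmeasure \<mu> A = (SUP F\<in>{F. finite F \<and> F \<subseteq> A}. (\<Sum>x\<in>F. ennreal (\<mu> x)))"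
  unfolding vmeasure_def by (rule nonneg_infsum_complete) simp

context modg begin

abbreviation "M \<equiv> mod_mu wo \<mu>o \<sigma>o n"
abbreviation "VV \<equiv> mod_V Vo ori n"

definition H :: "'a \<times> 'a \<times> nat \<Rightarrow> real" where
  "H p = (case p of (a, b, i) \<Rightarrow> 2 * wo a b * (\<sigma>o a b)\<^sup>2 / real (n a b))"

lemma M_nonneg: "v \<in> VV \<Longrightarrow> 0 \<le> M v"
proof (cases v)
  case (Orig z)
  assume "v \<in> VV" then show ?thesis using Orig mu_pos by (auto simp: mod_V_def less_imp_le)
next
  case (Sub x y i)
  assume "v \<in> VV" then have "ori x y" using Sub by (auto simp: mod_V_def)
  then have "wo x y > 0" by (rule ori_w)
  then show ?thesis using Sub by simp
qed

lemma lower: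
  assumes x0: "x0 \<in> Vo"
  shows "vmeasure \<mu>o (cball_in Vo d0 x0 r) \<le> vmeasure M (cball_in VV (path_dist W Sg) (Orig x0) r)"
  unfolding vm_SUP[of \<mu>o] 
proof (rule SUP_least)
  fix F assume F: "F \<in> {F. finite F \<and> F \<subseteq> cball_in Vo d0 x0 r}"
  have sub: "Orig ` F \<subseteq> cball_in VV (path_dist W Sg) (Orig x0) r"
  proof
    fix v assume "v \<in> Orig ` F"
    then obtain z where z: "v = Orig z" "z \<in> F" by blast
    then have "z \<in> Vo" "d0 x0 z \<le> r" using F by (auto simp: cball_in_def)
    then show "v \<in> cball_in VV (path_dist W Sg) (Orig x0) r"
      using z part1[OF x0] by (auto simp: cball_in_def mod_V_def)
  qed
  have "(\<Sum>x\<in>F. ennreal (\<mu>o x)) = (\<Sum>v\<in>Orig ` F. ennreal (M v))"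
    by (subst sum.reindex) (auto simp: inj_on_def)
  also have "\<dots> \<le> vmeasure M (cball_in VV (path_dist W Sg) (Orig x0) r)"
    unfolding vm_SUP[of M] by (rule SUP_upper) (use F sub in auto)
  finally show "(\<Sum>x\<in>F. ennreal (\<mu>o x)) \<le> vmeasure M (cball_in VV (path_dist W Sg) (Orig x0) r)" .
qed

end



context modg begin

lemma inner_bound:
  assumes a: "a \<in> Vo"
  shows "(\<Sum>b\<in>{b. wo a b > 0}. \<Sum>i\<in>{1..n a b - 1}. H (a, b, i)) \<le> 2 * \<mu>o a"
proof -
  have "(\<Sum>b\<in>{b. wo a b > 0}. \<Sum>i\<in>{1..n a b - 1}. H (a, b, i))
      \<le> (\<Sum>b\<in>{b. wo a b > 0}. 2 * (wo a b * (\<sigma>o a b)\<^sup>2))"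
  proof (rule sum_mono)
    fix b assume "b \<in> {b. wo a b > 0}"
    then have e: "wo a b > 0" by simp
    have N: "2 \<le> n a b" using nge2[OF e] .
    have "(\<Sum>i\<in>{1..n a b - 1}. H (a, b, i)) = real (n a b - 1) * (2 * wo a b * (\<sigma>o a b)\<^sup>2 / real (n a b))"
      by (simp add: H_def)
    also have "\<dots> \<le> real (n a b) * (2 * wo a b * (\<sigma>o a b)\<^sup>2 / real (n a b))"
      by (rule mult_right_mono) (use e in auto)
    also have "\<dots> = 2 * (wo a b * (\<sigma>o a b)\<^sup>2)" using N by simp
    finally show "(\<Sum>i\<in>{1..n a b - 1}. H (a, b, i)) \<le> 2 * (wo a b * (\<sigma>o a b)\<^sup>2)" .
  qed
  also have "\<dots> = 2 * (\<Sum>b\<in>{b. wo a b > 0}. wo a b * (\<sigma>o a b)\<^sup>2)" by (simp add: sum_distrib_left)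
  also have "\<dots> \<le> 2 * \<mu>o a" using adapted[OF a] by simp
  finally show ?thesis .
qed

lemma upper_real:
  assumes x0: "x0 \<in> Vo" and F: "finite F" and FB: "F \<subseteq> cball_in VV (path_dist W Sg) (Orig x0) r"
  shows "\<exists>A. finite A \<and> A \<subseteq> cball_in Vo d0 x0 r \<and> sum M F \<le> 3 * sum \<mu>o A"
proof -
  define Bo where "Bo = cball_in Vo d0 x0 r"
  define F1 where "F1 = {z. Orig z \<in> F}"
  define FS where "FS = F - range Orig"
  define \<phi> where "\<phi> s = (case s of Orig z \<Rightarrow> (z, z, 0) | Sub x y i \<Rightarrow> if x \<in> Bo then (x, y, i) else (y, x, i))" for s
  define A where "A = F1 \<union> fst ` \<phi> ` FS"
  have FS_fin: "finite FS" using F by (simp add: FS_def)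
  have F1_fin: "finite F1" proof -
    have "F1 = Orig -` F" by (auto simp: F1_def)
    then show ?thesis using finite_vimageI[OF F, of Orig] by (auto simp: inj_on_def)
  qed
  have A_fin: "finite A" using F1_fin FS_fin by (simp add: A_def)
  have FSel: "\<exists>x y i. s = Sub x y i \<and> ori x y \<and> 1 \<le> i \<and> i \<le> n x y - 1 \<and> (x \<in> Bo \<or> y \<in> Bo)" if s: "s \<in> FS" for s
  proof -
    from s have sF: "s \<in> F" and nO: "s \<notin> range Orig" by (auto simp: FS_def)
    then obtain x y i where si: "s = Sub x y i" by (cases s) auto
    have sB: "s \<in> cball_in VV (path_dist W Sg) (Orig x0) r" using sF FB by blast
    then have o: "ori x y" and i: "1 \<le> i" "i \<le> n x y - 1" using si by (auto simp: cball_in_def mod_V_def)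
    have "d0 x0 x \<le> r \<or> d0 x0 y \<le> r" using sub_in_ball[OF x0 o i] sB si by (auto simp: cball_in_def)
    then have "x \<in> Bo \<or> y \<in> Bo" using wV[OF ori_w[OF o]] by (auto simp: Bo_def cball_in_def)
    then show ?thesis using si o i by blast
  qed
  have F1Bo: "F1 \<subseteq> Bo"
  proof
    fix z assume "z \<in> F1"
    then have "Orig z \<in> cball_in VV (path_dist W Sg) (Orig x0) r" using FB by (auto simp: F1_def)
    then have z: "z \<in> Vo" "path_dist W Sg (Orig x0) (Orig z) \<le> r" by (auto simp: cball_in_def mod_V_def)
    then show "z \<in> Bo" using part1[OF x0 z(1)] by (simp add: Bo_def cball_in_def)
  qed
  have phiA: "fst (\<phi> s) \<in> Bo" if "s \<in> FS" for s
    using FSel[OF that] by (auto simp: \<phi>_def)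
  have A_Bo: "A \<subseteq> Bo" using F1Bo phiA by (auto simp: A_def)
  have AV: "A \<subseteq> Vo" using A_Bo by (auto simp: Bo_def cball_in_def)
  have FO: "F \<inter> range Orig = Orig ` F1" by (auto simp: F1_def)
  have FVV: "F \<subseteq> VV" using FB by (auto simp: cball_in_def)
  have split: "sum M F = sum M (F \<inter> range Orig) + sum M FS"
    unfolding FS_def using F by (rule sum.Int_Diff)
  have p1: "sum M (F \<inter> range Orig) = sum \<mu>o F1"
    unfolding FO by (subst sum.reindex) (auto simp: inj_on_def)
  have p1': "sum \<mu>o F1 \<le> sum \<mu>o A"
  proof (rule sum_mono2[OF A_fin])
    show "F1 \<subseteq> A" by (auto simp: A_def)
    fix b assume "b \<in> A - F1" then have "b \<in> Vo" using AV by blast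
    then show "0 \<le> \<mu>o b" using mu_pos less_imp_le by blast
  qed
  define T where "T = Sigma A (\<lambda>a. Sigma {b. wo a b > 0} (\<lambda>b. {1..n a b - 1}))"
  have T_fin: "finite T" unfolding T_def
    using A_fin nb_fin AV by (intro finite_SigmaI) auto
  have inj: "inj_on \<phi> FS"
  proof (rule inj_onI)
    fix s s' assume s: "s \<in> FS" and s': "s' \<in> FS" and eq: "\<phi> s = \<phi> s'"
    obtain x y i where si: "s = Sub x y i" "ori x y" using FSel[OF s] by blast
    obtain x' y' i' where si': "s' = Sub x' y' i'" "ori x' y'" using FSel[OF s'] by blast
    show "s = s'" using eq si si' ori_anti by (auto simp: \<phi>_def split: if_splits)
  qed
  have HM: "H (\<phi> s) = M s" if sFS: "s \<in> FS" for s
  proof -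
    obtain x y i where si: "s = Sub x y i" "ori x y" using FSel[OF sFS] by blast
    have e: "wo x y > 0" using ori_w[OF si(2)] .
    show ?thesis using si wsym[of x y] sig[OF e] nsym[OF e] by (auto simp: \<phi>_def H_def)
  qed
  have phiT: "\<phi> ` FS \<subseteq> T"
  proof
    fix p assume "p \<in> \<phi> ` FS"
    then obtain s where s: "s \<in> FS" "p = \<phi> s" by blast
    then obtain x y i where si: "s = Sub x y i" "ori x y" "1 \<le> i" "i \<le> n x y - 1" using FSel by blast
    have e: "wo x y > 0" using ori_w[OF si(2)] .
    have "fst p \<in> A" using s by (auto simp: A_def)
    then show "p \<in> T" using s si e wsym[of x y] nsym[OF e] by (auto simp: \<phi>_def T_def split: if_splits)
  qed
  have Hnn: "0 \<le> H p" if "p \<in> T" for p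
    using that sig by (auto simp: T_def H_def less_imp_le)
  have "sum M FS = sum H (\<phi> ` FS)"
    by (subst sum.reindex[OF inj]) (simp add: HM)
  also have "\<dots> \<le> sum H T" by (rule sum_mono2[OF T_fin phiT]) (use Hnn in auto)
  also have "\<dots> = (\<Sum>a\<in>A. \<Sum>b\<in>{b. wo a b > 0}. \<Sum>i\<in>{1..n a b - 1}. H (a, b, i))"
  proof -
    have i: "(\<Sum>b\<in>{b. wo a b > 0}. \<Sum>i\<in>{1..n a b - 1}. H (a, b, i))
        = sum (\<lambda>(b, i). H (a, b, i)) (Sigma {b. wo a b > 0} (\<lambda>b. {1..n a b - 1}))" if "a \<in> A" for a
      using sum.Sigma[of "{b. wo a b > 0}" "\<lambda>b. {1..n a b - 1}" "\<lambda>b i. H (a, b, i)"] nb_fin AV that by auto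
    have eqf: "(\<lambda>(b, i). H (a, b, i)) = (\<lambda>p. H (a, p))" for a by auto
    have eqg: "(\<lambda>(a, p). H (a, p)) = H" by auto
    have "(\<Sum>a\<in>A. \<Sum>b\<in>{b. wo a b > 0}. \<Sum>i\<in>{1..n a b - 1}. H (a, b, i))
        = (\<Sum>a\<in>A. sum (\<lambda>p. H (a, p)) (Sigma {b. wo a b > 0} (\<lambda>b. {1..n a b - 1})))"
      using i by (intro sum.cong[OF refl]) (simp add: eqf)
    also have "\<dots> = sum (\<lambda>(a, p). H (a, p)) T"
      unfolding T_def
      by (rule sum.Sigma) (use A_fin nb_fin AV in auto)
    also have "\<dots> = sum H T" by (simp only: eqg)
    finally show ?thesis by simp
  qed
  also have "\<dots> \<le> (\<Sum>a\<in>A. 2 * \<mu>o a)" by (rule sum_mono) (use inner_bound AV in auto)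
  also have "\<dots> = 2 * sum \<mu>o A" by (simp add: sum_distrib_left)
  finally have p2: "sum M FS \<le> 2 * sum \<mu>o A" .
  show ?thesis
    by (rule exI[of _ A]) (use A_fin A_Bo split p1 p1' p2 in \<open>auto simp: Bo_def\<close>)
qed

end



context modg begin

lemma upper:
  assumes x0: "x0 \<in> Vo"
  shows "vmeasure M (cball_in VV (path_dist W Sg) (Orig x0) r) \<le> 3 * vmeasure \<mu>o (cball_in Vo d0 x0 r)"
  unfolding vm_SUP[of M]
proof (rule SUP_least)
  fix F assume F: "F \<in> {F. finite F \<and> F \<subseteq> cball_in VV (path_dist W Sg) (Orig x0) r}"
  then obtain A where A: "finite A" "A \<subseteq> cball_in Vo d0 x0 r" "sum M F \<le> 3 * sum \<mu>o A"
    using upper_real[OF x0] by blast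
  have FVV: "F \<subseteq> VV" using F by (auto simp: cball_in_def)
  have AV: "A \<subseteq> Vo" using A by (auto simp: cball_in_def)
  have "(\<Sum>v\<in>F. ennreal (M v)) = ennreal (sum M F)"
    by (rule sum_ennreal) (use FVV M_nonneg in auto)
  also have "\<dots> \<le> ennreal (3 * sum \<mu>o A)" by (rule ennreal_leI) (rule A(3))
  also have "\<dots> = 3 * ennreal (sum \<mu>o A)" by (simp add: ennreal_mult')
  also have "ennreal (sum \<mu>o A) = (\<Sum>x\<in>A. ennreal (\<mu>o x))"
    by (rule sum_ennreal[symmetric]) (use AV mu_pos less_imp_le in blast)
  finally have 1: "(\<Sum>v\<in>F. ennreal (M v)) \<le> 3 * (\<Sum>x\<in>A. ennreal (\<mu>o x))" .
  have 2: "(\<Sum>x\<in>A. ennreal (\<mu>o x)) \<le> vmeasure \<mu>o (cball_in Vo d0 x0 r)"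
    unfolding vm_SUP[of \<mu>o] by (rule SUP_upper) (use A in auto)
  show "(\<Sum>v\<in>F. ennreal (M v)) \<le> 3 * vmeasure \<mu>o (cball_in Vo d0 x0 r)"
    using order_trans[OF 1 mult_left_mono[OF 2]] by simp
qed

end

theorem lemma3p1:
  fixes Vo :: "'a set" and wo :: "'a \<Rightarrow> 'a \<Rightarrow> real" and \<mu>o :: "'a \<Rightarrow> real"
    and \<sigma>o :: "'a \<Rightarrow> 'a \<Rightarrow> real" and ori :: "'a \<Rightarrow> 'a \<Rightarrow> bool" and n :: "'a \<Rightarrow> 'a \<Rightarrow> nat"
  assumes G: "weighted_graph Vo wo \<mu>o"
    and S: "adapted_weight Vo wo \<mu>o \<sigma>o"
    and O: "orientation wo ori"
    and n_sym: "\<forall>x y. wo x y > 0 \<longrightarrow> n x y = n y x"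
    and n_ge2: "\<forall>x y. wo x y > 0 \<longrightarrow> 2 \<le> n x y"
  shows "(\<forall>x\<in>Vo. \<forall>y\<in>Vo.
            path_dist (mod_w wo ori n) (mod_sigma \<sigma>o ori n) (Orig x) (Orig y) = path_dist wo \<sigma>o x y)
       \<and> (\<forall>x0\<in>Vo. \<forall>r>0.
            vmeasure \<mu>o (cball_in Vo (path_dist wo \<sigma>o) x0 r)
              \<le> vmeasure (mod_mu wo \<mu>o \<sigma>o n)
                   (cball_in (mod_V Vo ori n) (path_dist (mod_w wo ori n) (mod_sigma \<sigma>o ori n)) (Orig x0) r)
          \<and> vmeasure (mod_mu wo \<mu>o \<sigma>o n)
                   (cball_in (mod_V Vo ori n) (path_dist (mod_w wo ori n) (mod_sigma \<sigma>o ori n)) (Orig x0) r)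
              \<le> 3 * vmeasure \<mu>o (cball_in Vo (path_dist wo \<sigma>o) x0 r))"
proof -
  interpret modg Vo wo \<mu>o \<sigma>o ori n using assms by (simp add: modg_def)
  show ?thesis using part1 lower upper by blast
qed


end
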